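(* For any $0<\epsilon_p\le 1$ and integers $k$ and $d=\Omega(\ln k)$, there is a family of $k$-means instances over the cube $[0,\Delta/\sqrt{d}]^d$ such that the optimal clustering cost of every instance in the family is $0$, but any $(\epsilon_p,0)$-differentially private algorithm (outputting $k$ centers) incurs an expected cost of $\Omega\!\left(\frac{\Delta^2 k d}{\epsilon_p}\right)$ on the family (i.e. its expected cost is at least an absolute constant times this quantity on some instance of the family).
   Context: A $k$-means instance is a finite multiset $D\subset\mathbb{R}^d$; the cost of a set $S$ of $k$ centers is $f_D(S)=\sum_{p\in D}\min_{\mu\in S}\|p-\mu\|_2^2$, and the optimal clustering cost is the minimum of $f_D(S)$ over all $S\subset\mathbb{R}^d$ with $|S|=k$. Two datasets are neighbouring if their symmetric difference has exactly one element. A randomized algorithm $A$ is $(\epsilon,0)$-differentially private if for all neighbouring $D,D'$ and every measurable set $S$ of outputs, $\Pr(A(D)\in S)\le e^{\epsilon}\Pr(A(D')\in S)$. *)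

theory Defs
  imports "HOL-Probability.Probability" "HOL-Library.Multiset"
begin

text \<open>Points of R^d are represented as functions nat => real that vanish
  outside the coordinates 0..d-1.\<close>

definition Rd :: "nat \<Rightarrow> (nat \<Rightarrow> real) set" where
  "Rd d = {p. \<forall>i\<ge>d. p i = 0}"

definition sqdist :: "nat \<Rightarrow> (nat \<Rightarrow> real) \<Rightarrow> (nat \<Rightarrow> real) \<Rightarrow> real" where
  "sqdist d p q = (\<Sum>i<d. (p i - q i)^2)"

definition cube :: "nat \<Rightarrow> real \<Rightarrow> (nat \<Rightarrow> real) set" where
  "cube d \<Delta> = {p \<in> Rd d. \<forall>i<d. 0 \<le> p i \<and> p i \<le> \<Delta> / sqrt (real d)}"

definition kmeans_cost :: "nat \<Rightarrow> (nat \<Rightarrow> real) multiset \<Rightarrow> (nat \<Rightarrow> real) set \<Rightarrow> real" where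
  "kmeans_cost d D S = (\<Sum>p\<in>#D. Min ((\<lambda>\<mu>. sqdist d p \<mu>) ` S))"

definition opt_cost :: "nat \<Rightarrow> nat \<Rightarrow> (nat \<Rightarrow> real) multiset \<Rightarrow> real" where
  "opt_cost d k D = (INF S \<in> {S. S \<subseteq> Rd d \<and> finite S \<and> card S = k}. kmeans_cost d D S)"

definition out_space :: "nat \<Rightarrow> nat \<Rightarrow> (nat \<Rightarrow> nat \<Rightarrow> real) measure" where
  "out_space d k = PiM {..<k} (\<lambda>_. PiM {..<d} (\<lambda>_. borel))"

definition tuple_cost :: "nat \<Rightarrow> nat \<Rightarrow> (nat \<Rightarrow> real) multiset \<Rightarrow> (nat \<Rightarrow> nat \<Rightarrow> real) \<Rightarrow> real" where
  "tuple_cost d k D S = kmeans_cost d D (S ` {..<k})"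

definition neighbouring :: "'a multiset \<Rightarrow> 'a multiset \<Rightarrow> bool" where
  "neighbouring D D' \<longleftrightarrow> size (D - D') + size (D' - D) = 1"

definition pure_dp :: "real \<Rightarrow> 'a set \<Rightarrow> 'o measure \<Rightarrow> ('a multiset \<Rightarrow> 'o measure) \<Rightarrow> bool" where
  "pure_dp \<epsilon> U M A \<longleftrightarrow>
     (\<forall>D. set_mset D \<subseteq> U \<longrightarrow> prob_space (A D) \<and> sets (A D) = sets M) \<and>
     (\<forall>D D' S. set_mset D \<subseteq> U \<longrightarrow> set_mset D' \<subseteq> U \<longrightarrow> neighbouring D D' \<longrightarrow> S \<in> sets M \<longrightarrow>
        measure (A D) S \<le> exp \<epsilon> * measure (A D') S)"

end

theory Submission
  imports Defs
begin

definition DS :: "nat \<Rightarrow> nat \<Rightarrow> (nat \<Rightarrow> (nat \<Rightarrow> real)) \<Rightarrow> (nat \<Rightarrow> real) multiset" where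
  "DS k m f = (\<Sum>c<k. replicate_mset m (f c))"

lemma sum_mset_rep:
  assumes "finite K"
  shows "(\<Sum>p\<in>#(\<Sum>c\<in>K. replicate_mset m (f c)). (g p::real)) = (\<Sum>c\<in>K. real m * g (f c))"
  using assms by (induction K rule: finite_induct) auto

lemma set_mset_rep:
  assumes "finite K"
  shows "set_mset (\<Sum>c\<in>K. replicate_mset m (f c)) \<subseteq> f ` K"
  using assms by (induction K rule: finite_induct) auto

lemma neighbouring_add: "neighbouring (D + {#x#}) D"
  unfolding neighbouring_def by simp

lemma group_privacy:
  assumes dp: "pure_dp \<epsilon> U M A" and eps: "\<epsilon> \<ge> 0"
    and D: "set_mset D \<subseteq> U" and x: "x \<in> U" and S: "S \<in> sets M"
  shows "measure (A (D + replicate_mset m x)) S \<le> exp (\<epsilon> * m) * measure (A D) S"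
proof (induction m)
  case 0
  then show ?case by simp
next
  case (Suc m)
  have "measure (A (D + replicate_mset (Suc m) x)) S
      = measure (A ((D + replicate_mset m x) + {#x#})) S" by (simp add: add.assoc)
  also have "\<dots> \<le> exp \<epsilon> * measure (A (D + replicate_mset m x)) S"
  proof -
    have n: "neighbouring ((D + replicate_mset m x) + {#x#}) (D + replicate_mset m x)"
      by (rule neighbouring_add)
    have u: "set_mset ((D + replicate_mset m x) + {#x#}) \<subseteq> U" "set_mset (D + replicate_mset m x) \<subseteq> U"
      using D x by auto
    show ?thesis using dp n u S unfolding pure_dp_def by blast
  qed
  also have "\<dots> \<le> exp \<epsilon> * (exp (\<epsilon> * m) * measure (A D) S)"
    using Suc by (intro mult_left_mono) auto
  also have "\<dots> = exp (\<epsilon> * Suc m) * measure (A D) S"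
    by (simp add: mult_exp_exp algebra_simps)
  finally show ?case .
qed

lemma Min_sqdist_nonneg:
  assumes "finite S" "S \<noteq> {}"
  shows "0 \<le> Min ((\<lambda>\<mu>. sqdist d p \<mu>) ` S)"
  using assms by (subst Min_ge_iff) (auto simp: sqdist_def intro: sum_nonneg)

lemma kmeans_cost_nonneg:
  assumes "finite S" "S \<noteq> {}"
  shows "0 \<le> kmeans_cost d D S"
proof -
  have "(\<Sum>p\<in>#D. (0::real)) \<le> (\<Sum>p\<in>#D. Min ((\<lambda>\<mu>. sqdist d p \<mu>) ` S))"
    by (rule sum_mset_mono) (rule Min_sqdist_nonneg[OF assms])
  then show ?thesis unfolding kmeans_cost_def by simp
qed

lemma infinite_Rd:
  assumes "d \<ge> 1"
  shows "infinite (Rd d)"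
proof
  assume fin: "finite (Rd d)"
  let ?g = "\<lambda>n::nat. (\<lambda>i::nat. if i = 0 then real n else 0)"
  have "inj ?g"
  proof (rule injI)
    fix a b assume h: "?g a = ?g b"
    from fun_cong[OF h, of 0] show "a = b" by simp
  qed
  moreover have "range ?g \<subseteq> Rd d" using assms by (auto simp: Rd_def)
  ultimately have "finite (UNIV::nat set)"
    using fin by (meson finite_imageD finite_subset)
  then show False by simp
qed

lemma opt_cost_zero:
  assumes d: "d \<ge> 1" and k: "k \<ge> 1" and P: "finite P" "card P \<le> k" "P \<subseteq> Rd d"
    and D: "set_mset D \<subseteq> P"
  shows "opt_cost d k D = 0"
proof -
  have "infinite (Rd d - P)" using infinite_Rd[OF d] P(1) by simp
  then obtain B where B: "B \<subseteq> Rd d - P" "finite B" "card B = k - card P"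
    using infinite_arbitrarily_large by blast
  define S where "S = P \<union> B"
  have dis: "P \<inter> B = {}" using B by auto
  have S: "S \<subseteq> Rd d" "finite S" "card S = k"
    using B P dis unfolding S_def by (auto simp: card_Un_disjoint)
  have Sne: "S \<noteq> {}" using S k by auto
  have "kmeans_cost d D S = 0"
    unfolding kmeans_cost_def
  proof -
    have "\<And>p. p \<in># D \<Longrightarrow> Min ((\<lambda>\<mu>. sqdist d p \<mu>) ` S) = 0"
    proof -
      fix p assume "p \<in># D"
      then have "p \<in> S" using D unfolding S_def by auto
      show "Min ((\<lambda>\<mu>. sqdist d p \<mu>) ` S) = 0"
      proof (rule Min_eqI)
        show "finite ((\<lambda>\<mu>. sqdist d p \<mu>) ` S)" using S by simp
        show "\<And>y. y \<in> (\<lambda>\<mu>. sqdist d p \<mu>) ` S \<Longrightarrow> 0 \<le> y"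
          by (auto simp: sqdist_def intro: sum_nonneg)
        show "0 \<in> (\<lambda>\<mu>. sqdist d p \<mu>) ` S" using \<open>p \<in> S\<close>
          by (auto simp: sqdist_def image_iff intro!: bexI[of _ p])
      qed
    qed
    then have "image_mset (\<lambda>p. Min ((\<lambda>\<mu>. sqdist d p \<mu>) ` S)) D = image_mset (\<lambda>_. 0) D"
      by (intro image_mset_cong) auto
    then show "(\<Sum>p\<in>#D. Min ((\<lambda>\<mu>. sqdist d p \<mu>) ` S)) = 0"
      by simp
  qed
  let ?X = "{S. S \<subseteq> Rd d \<and> finite S \<and> card S = k}"
  have bdd: "bdd_below (kmeans_cost d D ` ?X)"
    by (rule bdd_belowI[of _ 0]) (use k in \<open>auto intro!: kmeans_cost_nonneg\<close>)
  have "opt_cost d k D \<le> 0"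
    unfolding opt_cost_def using cINF_lower[OF bdd, of S] S \<open>kmeans_cost d D S = 0\<close> by auto
  moreover have "opt_cost d k D \<ge> 0"
    unfolding opt_cost_def
    by (rule cINF_greatest) (use S k in \<open>auto intro!: kmeans_cost_nonneg\<close>)
  ultimately show ?thesis by simp
qed



lemma sum_PiE_split:
  assumes K: "finite K" "c \<in> K"
  shows "(\<Sum>f\<in>PiE K (\<lambda>_. G). \<Phi> (restrict f (K - {c})) (f c)) =
         (\<Sum>g\<in>PiE (K - {c}) (\<lambda>_. G). \<Sum>x\<in>G. (\<Phi> g x :: real))"
proof -
  let ?K = "K - {c}"
  have KK: "K = insert c ?K" using K by auto
  have eq: "PiE K (\<lambda>_. G) = (\<lambda>(y, g). g(c := y)) ` (G \<times> PiE ?K (\<lambda>_. G))"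
    by (subst KK, rule PiE_insert_eq)
  have inj: "inj_on (\<lambda>(y, g). g(c := y)) (G \<times> PiE ?K (\<lambda>_. G))"
    using inj_combinator[of c ?K "\<lambda>_. G"] by simp
  have "(\<Sum>f\<in>PiE K (\<lambda>_. G). \<Phi> (restrict f ?K) (f c)) =
        (\<Sum>p\<in>G \<times> PiE ?K (\<lambda>_. G). \<Phi> (restrict ((\<lambda>(y, g). g(c := y)) p) ?K) (((\<lambda>(y, g). g(c := y)) p) c))"
    unfolding eq by (rule sum.reindex[OF inj, unfolded comp_def])
  also have "\<dots> = (\<Sum>p\<in>G \<times> PiE ?K (\<lambda>_. G). \<Phi> (snd p) (fst p))"
  proof (rule sum.cong)
    fix p assume p: "p \<in> G \<times> PiE ?K (\<lambda>_. G)"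
    obtain y g where pyg: "p = (y, g)" by force
    have g: "g \<in> PiE ?K (\<lambda>_. G)" using p pyg by auto
    have "restrict (g(c := y)) ?K = g"
      using g by (auto simp: restrict_def PiE_def extensional_def fun_eq_iff)
    then show "\<Phi> (restrict ((\<lambda>(y, g). g(c := y)) p) ?K) (((\<lambda>(y, g). g(c := y)) p) c) = \<Phi> (snd p) (fst p)"
      using pyg by simp
  qed simp
  also have "\<dots> = (\<Sum>y\<in>G. \<Sum>g\<in>PiE ?K (\<lambda>_. G). \<Phi> g y)"
    by (rule sum.cartesian_product[symmetric, unfolded case_prod_unfold])
  also have "\<dots> = (\<Sum>g\<in>PiE ?K (\<lambda>_. G). \<Sum>y\<in>G. \<Phi> g y)"
    by (rule sum.swap)
  finally show ?thesis .
qed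

lemma ball_meas:
  assumes "j < k"
  shows "{S \<in> space (out_space d k). sqdist d x (S j) < r} \<in> sets (out_space d k)"
proof -
  let ?M = "PiM {..<k} (\<lambda>_. PiM {..<d} (\<lambda>_. borel :: real measure))"
  have cj: "(\<lambda>S. S j) \<in> measurable ?M (PiM {..<d} (\<lambda>_. borel :: real measure))"
    by (rule measurable_component_singleton) (use assms in simp)
  have ci[measurable]: "(\<lambda>S. S j i) \<in> borel_measurable ?M" if "i \<in> {..<d}" for i
    using measurable_comp[OF cj measurable_component_singleton[of i "{..<d}" "\<lambda>_. borel :: real measure"]] that
    by (simp add: comp_def)
  show ?thesis
    unfolding out_space_def sqdist_def by measurable
qed



lemma sum_indicator_card:
  assumes "finite G"
  shows "(\<Sum>x\<in>G. indicator {S \<in> X. P x S} S :: real) = (if S \<in> X then real (card {x\<in>G. P x S}) else 0)"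
proof -
  have "(\<Sum>x\<in>G. indicator {S \<in> X. P x S} S :: real) = (\<Sum>x\<in>G. if S \<in> X \<and> P x S then 1 else 0)"
    by (rule sum.cong) (auto simp: indicator_def)
  also have "\<dots> = (if S \<in> X then real (card {x\<in>G. P x S}) else 0)"
    using assms by (auto simp: sum.If_cases Int_def)
  finally show ?thesis .
qed

lemma DS_split:
  assumes "c < k"
  shows "DS k m f = (\<Sum>c'\<in>{..<k} - {c}. replicate_mset m (restrict f ({..<k} - {c}) c')) + replicate_mset m (f c)"
proof -
  have "DS k m f = replicate_mset m (f c) + (\<Sum>c'\<in>{..<k} - {c}. replicate_mset m (f c'))"
    unfolding DS_def using assms by (subst sum.remove[of _ c]) auto
  also have "(\<Sum>c'\<in>{..<k} - {c}. replicate_mset m (f c')) = (\<Sum>c'\<in>{..<k} - {c}. replicate_mset m (restrict f ({..<k} - {c}) c'))"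
    by (rule sum.cong) auto
  finally show ?thesis by (simp add: add.commute)
qed



lemma ball_sum:
  assumes Q: "prob_space Q" "sets Q = sets (out_space d k)" and G: "finite G"
    and ball: "\<And>y. card {x\<in>G. sqdist d x y < r} \<le> Nb"
  shows "(\<Sum>x\<in>G. measure Q (\<Union>j<k. {S\<in>space (out_space d k). sqdist d x (S j) < r})) \<le> real k * real Nb"
proof -
  interpret Q: prob_space Q by (rule Q(1))
  let ?M = "out_space d k"
  define Bj where "Bj x j = {S \<in> space ?M. sqdist d x (S j) < r}" for x j
  have spQ: "space Q = space ?M" by (rule sets_eq_imp_space_eq[OF Q(2)])
  have Bj_meas: "Bj x j \<in> sets Q" if "j < k" for x j
    unfolding Bj_def Q(2) using ball_meas[OF that] .
  have iind: "integrable Q (indicator (Bj x j) :: _ \<Rightarrow> real)" if "j < k" for x j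
    using Bj_meas[OF that] by (auto intro!: integrable_indicator simp: Q.emeasure_eq_measure)
  have "(\<Sum>x\<in>G. measure Q (\<Union>j<k. Bj x j)) \<le> (\<Sum>x\<in>G. \<Sum>j<k. measure Q (Bj x j))"
    by (intro sum_mono measure_UNION_le) (auto intro: Bj_meas)
  also have "\<dots> = (\<Sum>j<k. \<Sum>x\<in>G. measure Q (Bj x j))" by (rule sum.swap)
  also have "\<dots> \<le> (\<Sum>j<k. real Nb)"
  proof (rule sum_mono)
    fix j assume j: "j \<in> {..<k}"
    have "(\<Sum>x\<in>G. measure Q (Bj x j)) = (\<Sum>x\<in>G. integral\<^sup>L Q (indicator (Bj x j)))"
      by (rule sum.cong) (use spQ in \<open>auto simp: Bj_def Int_absorb2\<close>)
    also have "\<dots> = integral\<^sup>L Q (\<lambda>S. \<Sum>x\<in>G. indicator (Bj x j) S)"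
      by (rule Bochner_Integration.integral_sum[symmetric]) (use iind j in auto)
    also have "\<dots> \<le> integral\<^sup>L Q (\<lambda>S. real Nb)"
    proof (rule integral_mono)
      show "integrable Q (\<lambda>S. \<Sum>x\<in>G. indicator (Bj x j) S :: real)"
        by (rule Bochner_Integration.integrable_sum) (use iind j in auto)
      show "integrable Q (\<lambda>S. real Nb)" by simp
      fix S assume S: "S \<in> space Q"
      have "(\<Sum>x\<in>G. indicator (Bj x j) S :: real) = real (card {x\<in>G. sqdist d x (S j) < r})"
        unfolding Bj_def using sum_indicator_card[OF G, of "space ?M" "\<lambda>x S. sqdist d x (S j) < r" S] S spQ by simp
      then show "(\<Sum>x\<in>G. indicator (Bj x j) S :: real) \<le> real Nb" using ball[of "S j"] by simp
    qed
    also have "\<dots> = real Nb" using Q.prob_space by simp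
    finally show "(\<Sum>x\<in>G. measure Q (Bj x j)) \<le> real Nb" .
  qed
  also have "\<dots> = real k * real Nb" by simp
  finally show ?thesis unfolding Bj_def .
qed



lemma generic:
  fixes A :: "(nat \<Rightarrow> real) multiset \<Rightarrow> (nat \<Rightarrow> nat \<Rightarrow> real) measure"
  assumes k: "k \<ge> 1" and eps: "\<epsilon> > 0"
    and G: "finite G" "G \<subseteq> cube d \<Delta>" "G \<noteq> {}"
    and ball: "\<And>y. card {x\<in>G. sqdist d x y < r} \<le> Nb"
    and cond: "real k * exp (\<epsilon> * m) * Nb \<le> card G / 2"
    and r: "r \<ge> 0"
    and dp: "pure_dp \<epsilon> (cube d \<Delta>) (out_space d k) A"
  shows "\<exists>f\<in>PiE {..<k} (\<lambda>_. G). (\<integral>\<^sup>+S. ennreal (tuple_cost d k (DS k m f) S) \<partial>(A (DS k m f))) \<ge> ennreal (k*m*r/2)"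
proof -
  define M where "M = out_space d k"
  define Bj where "Bj x j = {S \<in> space M. sqdist d x (S j) < r}" for x j
  define Bx where "Bx x = (\<Union>j<k. Bj x j)" for x
  have Bj_meas: "Bj x j \<in> sets M" if "j < k" for x j
    unfolding Bj_def M_def using ball_meas[OF that] .
  have Bx_meas: "Bx x \<in> sets M" for x
    unfolding Bx_def using Bj_meas by auto
  have dpU: "prob_space (A D) \<and> sets (A D) = sets M" if "set_mset D \<subseteq> cube d \<Delta>" for D
    using dp that unfolding pure_dp_def M_def by auto
  let ?F = "PiE {..<k} (\<lambda>_. G)"
  have DSin: "set_mset (DS k m f) \<subseteq> cube d \<Delta>" if "f \<in> ?F" for f
    using set_mset_rep[of "{..<k}" m f] that G(2) unfolding DS_def by auto
  define L where "L f = (\<Sum>c<k. m * r * (1 - measure (A (DS k m f)) (Bx (f c))))" for f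
  have step1: "(\<integral>\<^sup>+S. ennreal (tuple_cost d k (DS k m f) S) \<partial>(A (DS k m f))) \<ge> ennreal (L f)"
    if f: "f \<in> ?F" for f
  proof -
    let ?P = "A (DS k m f)"
    have P: "prob_space ?P" "sets ?P = sets M" using dpU[OF DSin[OF f]] by auto
    have spP: "space ?P = space M" by (rule sets_eq_imp_space_eq[OF P(2)])
    interpret P: prob_space ?P by (rule P(1))
    define h where "h S = (\<Sum>c<k. m * r * (1 - indicator (Bx (f c)) S))" for S
    have Bx_sub: "Bx x \<subseteq> space M" for x unfolding Bx_def Bj_def by auto
    have ne: "S ` {..<k} \<noteq> {}" for S :: "nat \<Rightarrow> nat \<Rightarrow> real" using k by (auto simp: lessThan_empty_iff)
    have hle: "h S \<le> tuple_cost d k (DS k m f) S" if S: "S \<in> space M" for S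
    proof -
      have tc: "tuple_cost d k (DS k m f) S = (\<Sum>c<k. real m * Min ((\<lambda>\<mu>. sqdist d (f c) \<mu>) ` S ` {..<k}))"
        unfolding tuple_cost_def kmeans_cost_def DS_def by (rule sum_mset_rep) simp
      show ?thesis unfolding tc h_def
      proof (rule sum_mono)
        fix c assume "c \<in> {..<k}"
        have "r * (1 - indicator (Bx (f c)) S) \<le> Min ((\<lambda>\<mu>. sqdist d (f c) \<mu>) ` S ` {..<k})"
        proof (cases "S \<in> Bx (f c)")
          case True
          then show ?thesis using Min_sqdist_nonneg[of "S ` {..<k}" d "f c"] ne by simp
        next
          case False
          then have "\<forall>j<k. r \<le> sqdist d (f c) (S j)" using S unfolding Bx_def Bj_def by (auto simp: not_less)
          then have "r \<le> Min ((\<lambda>\<mu>. sqdist d (f c) \<mu>) ` S ` {..<k})"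
            using ne by (subst Min_ge_iff) auto
          then show ?thesis using False by simp
        qed
        then show "real m * r * (1 - indicator (Bx (f c)) S) \<le> real m * Min ((\<lambda>\<mu>. sqdist d (f c) \<mu>) ` S ` {..<k})"
          by (simp add: mult.assoc mult_left_mono)
      qed
    qed
    have hnn: "0 \<le> h S" for S
      unfolding h_def using r by (intro sum_nonneg mult_nonneg_nonneg) (auto simp: indicator_def)
    have Bx_measP: "Bx x \<in> sets ?P" for x using Bx_meas P(2) by auto
    have iind: "integrable ?P (indicator (Bx x) :: _ \<Rightarrow> real)" for x
      using Bx_measP by (auto intro!: integrable_indicator simp: P.emeasure_eq_measure)
    have i1: "integrable ?P (\<lambda>S. 1 - indicator (Bx x) S :: real)" for x
      by (rule Bochner_Integration.integrable_diff) (use Bx_measP in \<open>auto intro!: integrable_indicator simp: P.emeasure_eq_measure\<close>)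
    have int: "integrable ?P h"
      unfolding h_def using i1 by (intro Bochner_Integration.integrable_sum) auto
    have "integral\<^sup>L ?P h = L f"
    proof -
      have "integral\<^sup>L ?P h = (\<Sum>c<k. integral\<^sup>L ?P (\<lambda>S. m * r * (1 - indicator (Bx (f c)) S)))"
        unfolding h_def using i1
        by (intro Bochner_Integration.integral_sum) auto
      also have "\<dots> = L f"
        unfolding L_def
      proof (rule sum.cong)
        fix c assume "c \<in> {..<k}"
        have iind: "integrable ?P (indicator (Bx x) :: _ \<Rightarrow> real)" for x
      using Bx_measP by (auto intro!: integrable_indicator simp: P.emeasure_eq_measure)
    have i1: "integrable ?P (\<lambda>S. 1 - indicator (Bx (f c)) S :: real)"
          by (rule Bochner_Integration.integrable_diff) (use Bx_measP in \<open>auto intro!: integrable_indicator simp: P.emeasure_eq_measure\<close>)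
        have "integral\<^sup>L ?P (\<lambda>S. m * r * (1 - indicator (Bx (f c)) S)) = m * r * integral\<^sup>L ?P (\<lambda>S. 1 - indicator (Bx (f c)) S :: real)"
          by simp
        also have "integral\<^sup>L ?P (\<lambda>S. 1 - indicator (Bx (f c)) S :: real) = 1 - measure ?P (Bx (f c))"
        proof -
          have "integral\<^sup>L ?P (\<lambda>S. 1 - indicator (Bx (f c)) S :: real) = integral\<^sup>L ?P (\<lambda>S. 1) - integral\<^sup>L ?P (indicator (Bx (f c)))"
            by (rule Bochner_Integration.integral_diff) (use iind in auto)
          also have "\<dots> = 1 - measure ?P (Bx (f c))"
            using Bx_sub spP P.prob_space by (simp add: Int_absorb2)
          finally show ?thesis .
        qed
        finally show "integral\<^sup>L ?P (\<lambda>S. m * r * (1 - indicator (Bx (f c)) S)) = m * r * (1 - measure ?P (Bx (f c)))" .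
      qed simp
      finally show ?thesis .
    qed
    then have "(\<integral>\<^sup>+S. ennreal (h S) \<partial>?P) = ennreal (L f)"
      using nn_integral_eq_integral[OF int] hnn by simp
    moreover have "(\<integral>\<^sup>+S. ennreal (h S) \<partial>?P) \<le> (\<integral>\<^sup>+S. ennreal (tuple_cost d k (DS k m f) S) \<partial>?P)"
      by (rule nn_integral_mono) (use hle spP in \<open>auto intro: ennreal_leI\<close>)
    ultimately show ?thesis by simp
  qed
  have step2: "\<exists>f\<in>?F. L f \<ge> real k * real m * r / 2"
  proof (rule ccontr)
    assume neg: "\<not> ?thesis"
    define n where "n = card G"
    have finF: "finite ?F" using G(1) by (simp add: finite_PiE)
    have cardF: "card ?F = n ^ k" unfolding n_def by (simp add: card_PiE)
    have Fne: "?F \<noteq> {}" using G(3) by (simp add: PiE_eq_empty_iff)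
    have n_pos: "n > 0" unfolding n_def using G(1,3) by (simp add: card_gt_0_iff)
    have percomp: "(\<Sum>f\<in>?F. measure (A (DS k m f)) (Bx (f c))) \<le> real (n ^ k) / 2" if c: "c < k" for c
    proof -
      let ?K = "{..<k} - {c}"
      define Dm :: "(nat \<Rightarrow> nat \<Rightarrow> real) \<Rightarrow> (nat \<Rightarrow> real) multiset" where "Dm g = (\<Sum>c'\<in>?K. replicate_mset m (g c'))" for g
      have Dm_in: "set_mset (Dm (restrict f ?K)) \<subseteq> cube d \<Delta>" if "f \<in> ?F" for f
        using set_mset_rep[of ?K m "restrict f ?K"] that G(2) unfolding Dm_def by fastforce
      have Dm_in2: "set_mset (Dm g) \<subseteq> cube d \<Delta>" if "g \<in> PiE ?K (\<lambda>_. G)" for g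
        using set_mset_rep[of ?K m g] that G(2) unfolding Dm_def by fastforce
      have "(\<Sum>f\<in>?F. measure (A (DS k m f)) (Bx (f c))) \<le>
            (\<Sum>f\<in>?F. exp (\<epsilon> * m) * measure (A (Dm (restrict f ?K))) (Bx (f c)))"
      proof (rule sum_mono)
        fix f assume f: "f \<in> ?F"
        have "DS k m f = Dm (restrict f ?K) + replicate_mset m (f c)"
          unfolding Dm_def by (rule DS_split[OF c])
        moreover have "f c \<in> cube d \<Delta>" using f c G(2) by auto
        ultimately show "measure (A (DS k m f)) (Bx (f c)) \<le> exp (\<epsilon> * m) * measure (A (Dm (restrict f ?K))) (Bx (f c))"
          using group_privacy[OF dp _ Dm_in[OF f], of "f c" "Bx (f c)" m] eps Bx_meas unfolding M_def by auto
      qed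
      also have "\<dots> = exp (\<epsilon> * m) * (\<Sum>f\<in>?F. measure (A (Dm (restrict f ?K))) (Bx (f c)))"
        by (simp add: sum_distrib_left)
      also have "(\<Sum>f\<in>?F. measure (A (Dm (restrict f ?K))) (Bx (f c))) =
                 (\<Sum>g\<in>PiE ?K (\<lambda>_. G). \<Sum>x\<in>G. measure (A (Dm g)) (Bx x))"
        by (rule sum_PiE_split[where K="{..<k}" and c=c and G=G and \<Phi>="\<lambda>g x. measure (A (Dm g)) (Bx x)"]) (use c in auto)
      also have "\<dots> \<le> (\<Sum>g\<in>PiE ?K (\<lambda>_. G). real k * real Nb)"
      proof (rule sum_mono)
        fix g assume g: "g \<in> PiE ?K (\<lambda>_. G)"
        have Q: "prob_space (A (Dm g))" "sets (A (Dm g)) = sets (out_space d k)"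
          using dpU[OF Dm_in2[OF g]] unfolding M_def by auto
        show "(\<Sum>x\<in>G. measure (A (Dm g)) (Bx x)) \<le> real k * real Nb"
          using ball_sum[OF Q G(1) ball] unfolding Bx_def Bj_def M_def .
      qed
      also have "\<dots> = real (n ^ (k - 1)) * (real k * real Nb)"
        using G(1) c by (simp add: card_PiE n_def card_Diff_singleton)
      finally have "(\<Sum>f\<in>?F. measure (A (DS k m f)) (Bx (f c))) \<le> exp (\<epsilon> * m) * (real (n ^ (k - 1)) * (real k * real Nb))"
        by (simp add: mult_left_mono)
      also have "\<dots> = real (n ^ (k - 1)) * (real k * exp (\<epsilon> * m) * real Nb)" by simp
      also have "\<dots> \<le> real (n ^ (k - 1)) * (real n / 2)"
        using cond unfolding n_def by (intro mult_left_mono) auto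
      also have "\<dots> = real (n ^ k) / 2"
      proof -
        obtain k' where "k = Suc k'" using k by (cases k) auto
        then show ?thesis by simp
      qed
      finally show ?thesis .
    qed
    have sw: "(\<Sum>f\<in>?F. \<Sum>c<k. real m * r * measure (A (DS k m f)) (Bx (f c))) = m * r * (\<Sum>c<k. \<Sum>f\<in>?F. measure (A (DS k m f)) (Bx (f c)))"
      by (subst sum.swap) (simp add: sum_distrib_left)
    have "(\<Sum>f\<in>?F. L f) = (\<Sum>f\<in>?F. \<Sum>c<k. m * r) - (\<Sum>f\<in>?F. \<Sum>c<k. real m * r * measure (A (DS k m f)) (Bx (f c)))"
      unfolding L_def by (simp only: right_diff_distrib mult_1_right sum_subtractf)
    also have "\<dots> = (\<Sum>f\<in>?F. \<Sum>c<k. m * r) - m * r * (\<Sum>c<k. \<Sum>f\<in>?F. measure (A (DS k m f)) (Bx (f c)))"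
      using sw by simp
    also have "\<dots> \<ge> real (n ^ k) * (k * m * r) - m * r * (\<Sum>c<k. real (n ^ k) / 2)"
    proof -
      have "(\<Sum>c<k. \<Sum>f\<in>?F. measure (A (DS k m f)) (Bx (f c))) \<le> (\<Sum>c<k. real (n ^ k) / 2)"
        by (rule sum_mono) (use percomp in auto)
      then have "m * r * (\<Sum>c<k. \<Sum>f\<in>?F. measure (A (DS k m f)) (Bx (f c))) \<le> m * r * (\<Sum>c<k. real (n ^ k) / 2)"
        using r by (intro mult_left_mono) auto
      moreover have "(\<Sum>f\<in>?F. \<Sum>c<k. real m * r) = real (n ^ k) * (k * m * r)"
        using cardF by simp
      ultimately show ?thesis by linarith
    qed
    finally have ge: "(\<Sum>f\<in>?F. L f) \<ge> real (n ^ k) * (real k * real m * r / 2)"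
      by (simp add: algebra_simps)
    have "(\<Sum>f\<in>?F. L f) < (\<Sum>f\<in>?F. real k * real m * r / 2)"
      using neg finF Fne by (intro sum_strict_mono) auto
    also have "\<dots> = real (n ^ k) * (real k * real m * r / 2)" using cardF by simp
    finally show False using ge by simp
  qed
  then obtain f where f: "f \<in> ?F" "L f \<ge> real k * real m * r / 2" by blast
  have "ennreal (real k * real m * r / 2) \<le> ennreal (L f)" using f(2) by (rule ennreal_leI)
  also have "\<dots> \<le> (\<integral>\<^sup>+S. ennreal (tuple_cost d k (DS k m f) S) \<partial>(A (DS k m f)))" by (rule step1[OF f(1)])
  finally show ?thesis using f(1) by auto
qed



definition xA :: "real \<Rightarrow> nat set \<Rightarrow> (nat \<Rightarrow> real)" where
  "xA s A = (\<lambda>i. if i \<in> A then s else 0)"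


lemma inj_xA: assumes "s \<noteq> 0" shows "inj (xA s)"
proof (rule injI)
  fix A B assume h: "xA s A = xA s B"
  show "A = B"
  proof (rule set_eqI)
    fix i from fun_cong[OF h, of i] assms show "i \<in> A \<longleftrightarrow> i \<in> B"
      unfolding xA_def by (auto split: if_splits)
  qed
qed

lemma card_small_subsets:
  "real (card {C \<in> Pow {..<d}. 16 * card C < d}) \<le> (17/16) ^ d * 16 powr (real d / 16)"
proof -
  let ?S = "{C \<in> Pow {..<d}. 16 * card C < d}"
  have "real (card ?S) = (\<Sum>C\<in>?S. 1)" by simp
  also have "\<dots> \<le> (\<Sum>C\<in>?S. (1/16) ^ card C * 16 powr (real d / 16))"
  proof (rule sum_mono)
    fix C assume C: "C \<in> ?S"
    have "(16::real) ^ card C = 16 powr (real (card C))" by (simp add: powr_realpow)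
    also have "\<dots> \<le> 16 powr (real d / 16)" using C by (intro powr_mono) auto
    finally have "(16::real) ^ card C \<le> 16 powr (real d / 16)" .
    then have "(1/16) ^ card C * (16::real) ^ card C \<le> (1/16) ^ card C * 16 powr (real d / 16)"
      by (intro mult_left_mono) auto
    then show "1 \<le> (1/16) ^ card C * 16 powr (real d / 16)"
      by (simp add: power_mult_distrib[symmetric])
  qed
  also have "\<dots> \<le> (\<Sum>C\<in>Pow {..<d}. (1/16) ^ card C * 16 powr (real d / 16))"
    by (rule sum_mono2) auto
  also have "\<dots> = (\<Sum>C\<in>Pow {..<d}. (1/16::real) ^ card C) * 16 powr (real d / 16)"
    by (simp add: sum_distrib_right)
  also have "(\<Sum>C\<in>Pow {..<d}. (1/16::real) ^ card C) = (17/16) ^ d"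
  proof -
    have "(\<Prod>i\<in>{..<d}. (1/16::real) + 1) = (\<Sum>X\<in>Pow {..<d}. (\<Prod>i\<in>X. 1/16) * (\<Prod>i\<in>{..<d} - X. 1))"
      by (rule prod_add) simp
    then show ?thesis by simp
  qed
  finally show ?thesis .
qed

lemma ball_binary:
  assumes d: "d \<ge> 1" and D: "\<Delta> > 0"
  shows "card {x \<in> xA (\<Delta> / sqrt d) ` Pow {..<d}. sqdist d x y < \<Delta>^2/64} \<le> card {C \<in> Pow {..<d}. 16 * card C < d}"
proof -
  define s where "s = \<Delta> / sqrt d"
  have s_pos: "s > 0" using d D unfolding s_def by auto
  have s2: "s^2 = \<Delta>^2 / d" unfolding s_def using d by (simp add: power_divide)
  define Z where "Z = {i. i < d \<and> y i > s/2}"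
  define sd where "sd A B = (A - B) \<union> (B - A)" for A B :: "nat set"
  let ?S = "{C \<in> Pow {..<d}. 16 * card C < d}"
  have sub: "{x \<in> xA s ` Pow {..<d}. sqdist d x y < \<Delta>^2/64} \<subseteq> xA s ` ((\<lambda>C. sd C Z) ` ?S)"
  proof
    fix x assume "x \<in> {x \<in> xA s ` Pow {..<d}. sqdist d x y < \<Delta>^2/64}"
    then obtain A where A: "A \<subseteq> {..<d}" "x = xA s A" and lt: "sqdist d x y < \<Delta>^2/64" by auto
    have sdsub: "sd A Z \<subseteq> {..<d}" using A unfolding sd_def Z_def by auto
    have "real (card (sd A Z)) * (s^2/4) = (\<Sum>i\<in>sd A Z. s^2/4)" by simp
    also have "\<dots> \<le> (\<Sum>i\<in>sd A Z. (x i - y i)^2)"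
    proof (rule sum_mono)
      fix i assume i: "i \<in> sd A Z"
      show "s^2/4 \<le> (x i - y i)^2"
      proof (cases "i \<in> A")
        case True
        then have "i \<notin> Z" "i < d" using i A unfolding sd_def by auto
        then have "y i \<le> s/2" unfolding Z_def by auto
        then have "s/2 \<le> x i - y i" using True A(2) unfolding xA_def by auto
        then have "(s/2)^2 \<le> (x i - y i)^2" using s_pos by (intro power_mono) auto
        then show ?thesis by (simp add: power_divide)
      next
        case False
        then have "i \<in> Z" using i unfolding sd_def by auto
        then have "y i > s/2" unfolding Z_def by auto
        then have "s/2 \<le> y i - x i" using False A(2) unfolding xA_def by auto
        then have "(s/2)^2 \<le> (y i - x i)^2" using s_pos by (intro power_mono) auto
        then show ?thesis by (simp add: power_divide power2_commute)
      qed
    qed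
    also have "\<dots> \<le> (\<Sum>i<d. (x i - y i)^2)"
      by (rule sum_mono2) (use sdsub in auto)
    finally have "real (card (sd A Z)) * (s^2/4) \<le> sqdist d x y" unfolding sqdist_def .
    moreover have "real (card (sd A Z)) * (s^2/4) = real (card (sd A Z)) * (\<Delta>^2 / d / 4)" by (simp add: s2)
    ultimately have "real (card (sd A Z)) * (\<Delta>^2 / d / 4) < \<Delta>^2/64" using lt by linarith
    then have "real (card (sd A Z)) * \<Delta>^2 * 16 < \<Delta>^2 * d" using d by (simp add: field_simps)
    then have "real (card (sd A Z)) * 16 < d" using D by (simp add: mult.commute mult.left_commute)
    then have "16 * card (sd A Z) < d" by linarith
    then have "sd A Z \<in> ?S" using sdsub by auto
    moreover have "A = sd (sd A Z) Z" unfolding sd_def by auto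
    ultimately show "x \<in> xA s ` ((\<lambda>C. sd C Z) ` ?S)" using A(2) by blast
  qed
  have "card {x \<in> xA s ` Pow {..<d}. sqdist d x y < \<Delta>^2/64} \<le> card (xA s ` ((\<lambda>C. sd C Z) ` ?S))"
    by (rule card_mono[OF _ sub]) simp
  also have "\<dots> \<le> card ((\<lambda>C. sd C Z) ` ?S)" by (rule card_image_le) simp
  also have "\<dots> \<le> card ?S" by (rule card_image_le) simp
  finally show ?thesis unfolding s_def .
qed



lemma family_ok:
  assumes d: "d \<ge> 1" and k: "k \<ge> 1" and G: "G \<subseteq> cube d \<Delta>" and f: "f \<in> PiE {..<k} (\<lambda>_. G)"
  shows "set_mset (DS k m f) \<subseteq> cube d \<Delta> \<and> opt_cost d k (DS k m f) = 0"
proof -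
  have s: "set_mset (DS k m f) \<subseteq> f ` {..<k}"
    unfolding DS_def by (rule set_mset_rep) simp
  have im: "f ` {..<k} \<subseteq> cube d \<Delta>" using f G by auto
  have "cube d \<Delta> \<subseteq> Rd d" unfolding cube_def by auto
  then have "opt_cost d k (DS k m f) = 0"
    using opt_cost_zero[OF d k, of "f ` {..<k}" "DS k m f"] s im card_image_le[of "{..<k}" f] by auto
  then show ?thesis using s im by auto
qed

lemma fam_instance:
  assumes d: "d \<ge> 1" and k: "k \<ge> 1" and eps: "\<epsilon> > 0"
    and G: "finite G" "G \<subseteq> cube d \<Delta>" "G \<noteq> {}"
    and ball: "\<And>y. card {x\<in>G. sqdist d x y < r} \<le> Nb"
    and cond: "real k * exp (\<epsilon> * m) * Nb \<le> card G / 2"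
    and r: "r \<ge> 0" and T: "T \<le> real k * real m * r / 2"
  shows "\<exists>F :: (nat \<Rightarrow> real) multiset set.
       (\<forall>D\<in>F. set_mset D \<subseteq> cube d \<Delta> \<and> opt_cost d k D = 0) \<and>
       (\<forall>A. pure_dp \<epsilon> (cube d \<Delta>) (out_space d k) A \<longrightarrow>
          (\<exists>D\<in>F. (\<integral>\<^sup>+ S. ennreal (tuple_cost d k D S) \<partial>(A D)) \<ge> ennreal T))"
proof (intro exI[of _ "DS k m ` PiE {..<k} (\<lambda>_. G)"] conjI allI impI)
  show "\<forall>D\<in>DS k m ` PiE {..<k} (\<lambda>_. G). set_mset D \<subseteq> cube d \<Delta> \<and> opt_cost d k D = 0"
    using family_ok[OF d k G(2)] by blast
  fix A assume dp: "pure_dp \<epsilon> (cube d \<Delta>) (out_space d k) A"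
  obtain f where f: "f \<in> PiE {..<k} (\<lambda>_. G)"
    and le: "ennreal (real k * real m * r / 2) \<le> (\<integral>\<^sup>+ S. ennreal (tuple_cost d k (DS k m f) S) \<partial>(A (DS k m f)))"
    using generic[OF k eps G ball cond r dp] by blast
  have "ennreal T \<le> ennreal (real k * real m * r / 2)" using T by (rule ennreal_leI)
  then show "\<exists>D\<in>DS k m ` PiE {..<k} (\<lambda>_. G). ennreal T \<le> (\<integral>\<^sup>+ S. ennreal (tuple_cost d k D S) \<partial>(A D))"
    using f le by (meson image_eqI order_trans)
qed



lemma binary_inst:
  assumes d: "d \<ge> 16" and k: "k \<ge> 1" and dk: "32 * ln (real k) \<le> real d"
    and eps: "0 < \<epsilon>" "\<epsilon> \<le> 1" and D: "\<Delta> > 0"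
  shows "\<exists>F :: (nat \<Rightarrow> real) multiset set.
       (\<forall>D\<in>F. set_mset D \<subseteq> cube d \<Delta> \<and> opt_cost d k D = 0) \<and>
       (\<forall>A. pure_dp \<epsilon> (cube d \<Delta>) (out_space d k) A \<longrightarrow>
          (\<exists>D\<in>F. (\<integral>\<^sup>+ S. ennreal (tuple_cost d k D S) \<partial>(A D)) \<ge> ennreal (1/102400 * \<Delta>^2 * real k * real d / \<epsilon>)))"
proof -
  define s where "s = \<Delta> / sqrt d"
  have d1: "d \<ge> 1" using d by simp
  have s_pos: "s > 0" using d D unfolding s_def by auto
  define G where "G = xA s ` Pow {..<d}"
  define Nb where "Nb = card {C \<in> Pow {..<d}. 16 * card C < d}"
  define x where "x = real d / (16 * \<epsilon>)"
  define m where "m = nat \<lfloor>x\<rfloor>"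
  have x1: "x \<ge> 1" using d eps unfolding x_def by (simp add: field_simps)
  have m_le: "real m \<le> x" unfolding m_def using x1 by simp
  have m_ge: "real m \<ge> x / 2"
  proof -
    have "real m = of_int \<lfloor>x\<rfloor>" unfolding m_def using x1 by simp
    moreover have "of_int \<lfloor>x\<rfloor> > x - 1" by linarith
    moreover have "of_int \<lfloor>x\<rfloor> \<ge> (1::real)" using x1 by (simp add: one_le_floor)
    ultimately show ?thesis using x1 by linarith
  qed
  have Gfin: "finite G" unfolding G_def by simp
  have Gne: "G \<noteq> {}" unfolding G_def by blast
  have Gcube: "G \<subseteq> cube d \<Delta>"
    unfolding G_def cube_def Rd_def xA_def s_def[symmetric] using s_pos by auto
  have cardG: "card G = 2 ^ d"
    unfolding G_def using card_image[OF inj_on_subset[OF inj_xA]] s_pos by (simp add: card_Pow)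
  have ball: "card {x\<in>G. sqdist d x y < \<Delta>^2/64} \<le> Nb" for y
    unfolding G_def Nb_def s_def using ball_binary[OF d1 D] .
  have cond: "real k * exp (\<epsilon> * m) * Nb \<le> card G / 2"
  proof -
    have kb: "real k \<le> exp (real d / 32)"
    proof -
      have "real k = exp (ln (real k))" using k by simp
      also have "\<dots> \<le> exp (real d / 32)" using dk by simp
      finally show ?thesis .
    qed
    have eb: "exp (\<epsilon> * m) \<le> exp (real d / 16)"
    proof -
      have "\<epsilon> * m \<le> \<epsilon> * x" using m_le eps by (intro mult_left_mono) auto
      also have "\<epsilon> * x = real d / 16" unfolding x_def using eps by simp
      finally show ?thesis by simp
    qed
    have l16: "ln (16::real) = 4 * ln 2"
    proof -
      have "ln ((2::real)^4) = 4 * ln 2" by (subst ln_realpow) auto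
      then show ?thesis by simp
    qed
    have l17: "ln (17/16::real) \<le> 1/16" using ln_le_minus_one[of "17/16"] by simp
    have nb: "real Nb \<le> exp (real d * ln (17/16) + real d / 16 * ln 16)"
    proof -
      have "real Nb \<le> (17/16) ^ d * 16 powr (real d / 16)" unfolding Nb_def by (rule card_small_subsets)
      also have "(17/16::real) ^ d = exp (real d * ln (17/16))"
        by (simp add: powr_realpow[symmetric] powr_def)
      also have "(16::real) powr (real d / 16) = exp (real d / 16 * ln 16)"
        by (simp add: powr_def)
      finally show ?thesis by (simp add: exp_add)
    qed
    have "real k * exp (\<epsilon> * m) * Nb \<le> exp (real d / 32) * exp (real d / 16) * exp (real d * ln (17/16) + real d / 16 * ln 16)"
      using kb eb nb by (intro mult_mono) auto
    also have "\<dots> = exp (real d / 32 + real d / 16 + real d * ln (17/16) + real d / 16 * ln 16)"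
      by (simp only: exp_add)
    also have "\<dots> \<le> exp (real d * ln 2 - ln 2)"
    proof -
      have a: "real d * ln (17/16) \<le> real d * (1/16)" using l17 by (intro mult_left_mono) auto
      have l2: "2/3 \<le> ln (2::real)" by (rule ln2_ge_two_thirds)
      have b: "(2/3) * (3 * real d / 4 - 1) \<le> ln 2 * (3 * real d / 4 - 1)"
        using l2 d by (intro mult_right_mono) auto
      have b': "real d / 2 - 2/3 \<le> 3/4 * (real d * ln 2) - ln 2" using b by (simp add: algebra_simps)
      have c: "real d / 16 * ln 16 = 1/4 * (real d * ln 2)" using l16 by simp
      have dd: "real d \<ge> 16" using d by simp
      have "real d / 32 + real d / 16 + real d * ln (17/16) + real d / 16 * ln 16 \<le> real d * ln 2 - ln 2"
        using a b' c dd by linarith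
      then show ?thesis by simp
    qed
    also have "\<dots> = 2 ^ d / 2"
      by (simp add: exp_diff exp_of_nat_mult)
    finally show ?thesis using cardG by simp
  qed
  have T: "1/102400 * \<Delta>^2 * real k * real d / \<epsilon> \<le> real k * real m * (\<Delta>^2/64) / 2"
  proof -
    have "1/102400 * \<Delta>^2 * real k * real d / \<epsilon> \<le> real k * (x / 2) * (\<Delta>^2/64) / 2"
      unfolding x_def using eps k by (simp add: field_simps)
    also have "\<dots> \<le> real k * real m * (\<Delta>^2/64) / 2"
      using m_ge by (intro divide_right_mono mult_right_mono mult_left_mono) auto
    finally show ?thesis .
  qed
  show ?thesis
    by (rule fam_instance[OF d1 k eps(1) Gfin Gcube Gne ball cond _ T]) simp
qed



lemma line_inst:
  assumes d: "d \<ge> 1" "d < 16" and k: "k = 1"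
    and eps: "0 < \<epsilon>" "\<epsilon> \<le> 1" and D: "\<Delta> > 0"
  shows "\<exists>F :: (nat \<Rightarrow> real) multiset set.
       (\<forall>D\<in>F. set_mset D \<subseteq> cube d \<Delta> \<and> opt_cost d k D = 0) \<and>
       (\<forall>A. pure_dp \<epsilon> (cube d \<Delta>) (out_space d k) A \<longrightarrow>
          (\<exists>D\<in>F. (\<integral>\<^sup>+ S. ennreal (tuple_cost d k D S) \<partial>(A D)) \<ge> ennreal (1/102400 * \<Delta>^2 * real k * real d / \<epsilon>)))"
proof -
  define h where "h = \<Delta> / (5 * sqrt d)"
  have h_pos: "h > 0" using d D unfolding h_def by auto
  have h2: "h^2 = \<Delta>^2 / (25 * d)" unfolding h_def using d by (simp add: power_divide power_mult_distrib)
  define p where "p j = (\<lambda>i::nat. if i = 0 then real j * h else 0)" for j :: nat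
  define G where "G = p ` {..<6}"
  define x where "x = 1/\<epsilon>"
  define m where "m = nat \<lfloor>x\<rfloor>"
  have x1: "x \<ge> 1" using eps unfolding x_def by simp
  have m_le: "real m \<le> 1/\<epsilon>" unfolding m_def x_def[symmetric] using x1 by simp
  have m_ge: "real m \<ge> 1/(2*\<epsilon>)"
  proof -
    have "real m = of_int \<lfloor>x\<rfloor>" unfolding m_def using x1 by simp
    moreover have "of_int \<lfloor>x\<rfloor> > x - 1" by linarith
    moreover have "of_int \<lfloor>x\<rfloor> \<ge> (1::real)" using x1 by (simp add: one_le_floor)
    ultimately have "real m \<ge> x / 2" using x1 by linarith
    then show ?thesis unfolding x_def by simp
  qed
  have Gfin: "finite G" unfolding G_def by simp
  have Gne: "G \<noteq> {}" unfolding G_def by (simp add: lessThan_empty_iff)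
  have Gcube: "G \<subseteq> cube d \<Delta>"
  proof
    fix x assume "x \<in> G"
    then obtain j where j: "j < 6" "x = p j" unfolding G_def by auto
    have "real j * h \<le> 5 * h" using j h_pos by (intro mult_right_mono) auto
    also have "5 * h = \<Delta> / sqrt d" unfolding h_def using d by simp
    finally have "real j * h \<le> \<Delta> / sqrt d" .
    then show "x \<in> cube d \<Delta>"
      unfolding cube_def Rd_def using j h_pos d D by (auto simp: p_def)
  qed
  have injp: "inj_on p {..<6}"
  proof (rule inj_onI)
    fix a b assume "a \<in> {..<6}" "b \<in> {..<6}" "p a = p b"
    from fun_cong[OF this(3), of 0] h_pos show "a = b" by (simp add: p_def)
  qed
  have cardG: "card G = 6" unfolding G_def using card_image[OF injp] by simp
  have ball: "card {x\<in>G. sqdist d x y < h^2/4} \<le> 1" for y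
  proof -
    have near: "\<bar>real a * h - y 0\<bar> < h/2" if "p a \<in> {x\<in>G. sqdist d x y < h^2/4}" for a
    proof -
      have "(real a * h - y 0)^2 = (p a 0 - y 0)^2" by (simp add: p_def)
      also have "\<dots> \<le> (\<Sum>i<d. (p a i - y i)^2)"
        by (rule member_le_sum[of 0 "{..<d}" "\<lambda>i. (p a i - y i)^2"]) (use d in auto)
      finally have "(real a * h - y 0)^2 \<le> sqdist d (p a) y" unfolding sqdist_def .
      moreover have lt: "sqdist d (p a) y < h^2/4" using that by simp
      moreover have h4: "(h/2)^2 = h^2/4" by (simp add: power_divide)
      ultimately have "(real a * h - y 0)^2 < (h/2)^2" by linarith
      then have ab: "\<bar>real a * h - y 0\<bar>^2 < (h/2)^2" by (simp only: power2_abs)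
      have "0 \<le> h/2" using h_pos by simp
      with ab show ?thesis by (rule power2_less_imp_less)
    qed
    have "card {x\<in>G. sqdist d x y < h^2/4} \<le> Suc 0"
    proof (subst card_le_Suc0_iff_eq)
      show "finite {x\<in>G. sqdist d x y < h^2/4}" using Gfin by simp
      show "\<forall>a\<in>{x\<in>G. sqdist d x y < h^2/4}. \<forall>b\<in>{x\<in>G. sqdist d x y < h^2/4}. a = b"
      proof (intro ballI)
        fix u v assume u: "u \<in> {x\<in>G. sqdist d x y < h^2/4}" and v: "v \<in> {x\<in>G. sqdist d x y < h^2/4}"
        obtain a where a: "u = p a" using u unfolding G_def by auto
        obtain b where b: "v = p b" using v unfolding G_def by auto
        have "\<bar>real a * h - y 0\<bar> < h/2" using near u a by simp
        moreover have "\<bar>real b * h - y 0\<bar> < h/2" using near v b by simp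
        ultimately have "\<bar>real a * h - real b * h\<bar> < h" unfolding abs_less_iff by linarith
        then have "\<bar>(real a - real b) * h\<bar> < h" by (simp only: left_diff_distrib)
        then have "\<bar>real a - real b\<bar> * h < 1 * h" using h_pos by (simp add: abs_mult)
        then have "\<bar>real a - real b\<bar> < 1" using h_pos by (simp only: mult_less_cancel_right)
        then have "a = b" by linarith
        then show "u = v" using a b by simp
      qed
    qed
    then show ?thesis by simp
  qed
  have cond: "real k * exp (\<epsilon> * m) * real (1::nat) \<le> card G / 2"
  proof -
    have "\<epsilon> * m \<le> \<epsilon> * (1/\<epsilon>)" using m_le eps by (intro mult_left_mono) auto
    then have "\<epsilon> * m \<le> 1" using eps by simp
    then have "exp (\<epsilon> * m) \<le> exp 1" by simp
    also have "\<dots> \<le> 3" by (rule exp_le)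
    finally show ?thesis using cardG k by simp
  qed
  have T: "1/102400 * \<Delta>^2 * real k * real d / \<epsilon> \<le> real k * real m * (h^2/4) / 2"
  proof -
    have dd: "real d * real d \<le> 256"
    proof -
      have "d * d \<le> 16 * 16" using d by (intro mult_le_mono) auto
      then have "real (d * d) \<le> 256" by (simp del: of_nat_mult)
      then show ?thesis by (simp only: of_nat_mult)
    qed
    have "1/102400 * \<Delta>^2 * real k * real d / \<epsilon> = (\<Delta>^2 / (400 * d * \<epsilon>)) * (real d * real d / 256)"
      using k d eps by (simp add: field_simps)
    also have "\<dots> \<le> (\<Delta>^2 / (400 * d * \<epsilon>)) * 1"
      using dd eps d by (intro mult_left_mono) auto
    also have "\<dots> = 1 * (1/(2*\<epsilon>)) * (\<Delta>^2 / (25 * d) / 4) / 2"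
      using eps d by (simp add: field_simps)
    also have "\<dots> \<le> 1 * real m * (\<Delta>^2 / (25 * d) / 4) / 2"
      using m_ge by (intro divide_right_mono mult_right_mono mult_left_mono) auto
    also have "\<dots> = real k * real m * (h^2/4) / 2"
      using k h2 by simp
    finally show ?thesis .
  qed
  show ?thesis
    by (rule fam_instance[OF d(1) _ eps(1) Gfin Gcube Gne ball cond _ T]) (use k in auto)
qed



theorem mainTheorem3:
  shows "\<exists>C>0. \<exists>c>0. \<forall>(\<epsilon>::real) (k::nat) (d::nat) (\<Delta>::real).
    0 < \<epsilon> \<and> \<epsilon> \<le> 1 \<and> k \<ge> 1 \<and> d \<ge> 1 \<and> real d \<ge> C * ln (real k) \<and> 0 < \<Delta> \<longrightarrow>
    (\<exists>F :: (nat \<Rightarrow> real) multiset set.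
       (\<forall>D\<in>F. set_mset D \<subseteq> cube d \<Delta> \<and> opt_cost d k D = 0) \<and>
       (\<forall>A. pure_dp \<epsilon> (cube d \<Delta>) (out_space d k) A \<longrightarrow>
          (\<exists>D\<in>F. (\<integral>\<^sup>+ S. ennreal (tuple_cost d k D S) \<partial>(A D))
                    \<ge> ennreal (c * \<Delta>^2 * real k * real d / \<epsilon>))))"
proof -
  have main: "\<forall>(\<epsilon>::real) (k::nat) (d::nat) (\<Delta>::real).
    0 < \<epsilon> \<and> \<epsilon> \<le> 1 \<and> k \<ge> 1 \<and> d \<ge> 1 \<and> real d \<ge> 32 * ln (real k) \<and> 0 < \<Delta> \<longrightarrow>
    (\<exists>F :: (nat \<Rightarrow> real) multiset set.
       (\<forall>D\<in>F. set_mset D \<subseteq> cube d \<Delta> \<and> opt_cost d k D = 0) \<and>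
       (\<forall>A. pure_dp \<epsilon> (cube d \<Delta>) (out_space d k) A \<longrightarrow>
          (\<exists>D\<in>F. (\<integral>\<^sup>+ S. ennreal (tuple_cost d k D S) \<partial>(A D))
                    \<ge> ennreal (1/102400 * \<Delta>^2 * real k * real d / \<epsilon>))))"
  proof (intro allI impI)
    fix \<epsilon> :: real and k d :: nat and \<Delta> :: real
    assume H: "0 < \<epsilon> \<and> \<epsilon> \<le> 1 \<and> k \<ge> 1 \<and> d \<ge> 1 \<and> real d \<ge> 32 * ln (real k) \<and> 0 < \<Delta>"
    show "\<exists>F :: (nat \<Rightarrow> real) multiset set.
       (\<forall>D\<in>F. set_mset D \<subseteq> cube d \<Delta> \<and> opt_cost d k D = 0) \<and>
       (\<forall>A. pure_dp \<epsilon> (cube d \<Delta>) (out_space d k) A \<longrightarrow>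
          (\<exists>D\<in>F. (\<integral>\<^sup>+ S. ennreal (tuple_cost d k D S) \<partial>(A D))
                    \<ge> ennreal (1/102400 * \<Delta>^2 * real k * real d / \<epsilon>)))"
    proof (cases "d \<ge> 16")
      case True
      then show ?thesis using binary_inst[of d k \<epsilon> \<Delta>] H by blast
    next
      case False
      have k1: "k = 1"
      proof (rule ccontr)
        assume "k \<noteq> 1"
        then have "real k \<ge> 2" using H by simp
        then have "ln (real k) \<ge> ln 2" by simp
        moreover have "2/3 \<le> ln (2::real)" by (rule ln2_ge_two_thirds)
        ultimately have "32 * ln (real k) \<ge> 64/3" by simp
        then have "real d \<ge> 64/3" using H by linarith
        then show False using False by simp
      qed
      show ?thesis using line_inst[of d k \<epsilon> \<Delta>] H False k1 by simp
    qed
  qed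
  show ?thesis
    by (rule exI[of _ "32::real"], rule conjI, simp, rule exI[of _ "1/102400::real"], rule conjI, simp)
       (rule main)
qed

end
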